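(* Consider $\texttt{CCI}_{n,\mu}(T,C,I,J)$ with $\mathcal{S},\mathcal{C}^{\text{out}},\mathcal{C}^{\text{in}}\subseteq\mathbb{N}$, and assume $\mathbb{E}[T^{1+\varepsilon}]<\infty$ for some $\varepsilon>0$, $\inf_i\{\lambda_i:\lambda_i>0\}>0$ and $\inf_j\{\varrho_j:\varrho_j>0\}>0$. Let $t,s\in\mathcal{S}$ be two vertex types that are stable at tolerance $\tau\in(0,1)$, and for $a\in[\lfloor\mu n\rfloor]$ let $\mathcal{A}^{(a)}_{ts}$ be the event that arc $a$ is placed from a vertex of type $t$ to a vertex of type $s$. Then there exists a constant $\widehat{C}>0$ such that $$\Big|\mathbb{P}(\mathcal{A}^{(a)}_{ts})-\frac{q_tq_s\kappa(t,s)}{\mu}\Big|\le\widehat{C}\log(n)n^{-\tau/2},$$ where $\kappa(t,s)=\mu\sum_{i,j}p_{ij}I(t,i)J(s,j)/(\lambda_i\varrho_j)$.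
   Context: Inputs: type distribution $T$ on $\mathcal{S}$, $q_k=\mathbb{P}(T=k)$; colour distribution $C=(C^{\text{out}},C^{\text{in}})$, $p_{ij}=\mathbb{P}(C^{\text{out}}=i,C^{\text{in}}=j)$; indicators $I:\mathcal{S}\times\mathcal{C}^{\text{out}}\to\{0,1\}$, $J:\mathcal{S}\times\mathcal{C}^{\text{in}}\to\{0,1\}$; $\mu>0$; $\lambda_i=\sum_kq_kI(k,i)$, $\varrho_j=\sum_kq_kJ(k,j)$. $\texttt{CCI}_{n,\mu}(T,C,I,J)$: vertex set $[n]$, i.i.d. types $T_v\sim T$; for each $a\in[\lfloor\mu n\rfloor]$ an independent colour $C_a\sim C$; choose $v$ uniformly from $\{v:I(T_v,C^{\text{out}}_a)=1\}$ and independently $w$ uniformly from $\{w:J(T_w,C^{\text{in}}_a)=1\}$, and add arc $a=(v,w)$. Stability: $u_n^\uparrow(\tau)=\inf\{t:q_s<n^{-1+\tau}\ \forall s\ge t\}$; type $t$ is stable at tolerance $\tau$ if $t<u_n^\uparrow(\tau)$. *)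

theory Defs
  imports "HOL-Probability.Probability"
begin

text \<open>Types and colours are natural numbers. T : type distribution, C : joint colour
distribution (out, in). Indicators I, J are Boolean-valued.\<close>

definition lam :: "nat pmf \<Rightarrow> (nat \<Rightarrow> nat \<Rightarrow> bool) \<Rightarrow> nat \<Rightarrow> real" where
  "lam T I i = measure_pmf.prob T {k. I k i}"

definition rho :: "nat pmf \<Rightarrow> (nat \<Rightarrow> nat \<Rightarrow> bool) \<Rightarrow> nat \<Rightarrow> real" where
  "rho T J j = measure_pmf.prob T {k. J k j}"

text \<open>Distribution of one arc given the vertex types ty on vertex set {1..n}.
If a candidate set is empty the arc is not placed (None).\<close>
definition arc_pmf :: "(nat \<times> nat) pmf \<Rightarrow> (nat \<Rightarrow> nat \<Rightarrow> bool) \<Rightarrow> (nat \<Rightarrow> nat \<Rightarrow> bool)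
    \<Rightarrow> nat \<Rightarrow> (nat \<Rightarrow> nat) \<Rightarrow> (nat \<times> nat) option pmf" where
  "arc_pmf C I J n ty =
     bind_pmf C (\<lambda>c.
       (let Vo = {v \<in> {1..n}. I (ty v) (fst c)};
            Wi = {w \<in> {1..n}. J (ty w) (snd c)}
        in if Vo = {} \<or> Wi = {} then return_pmf None
           else bind_pmf (pmf_of_set Vo) (\<lambda>v.
                  bind_pmf (pmf_of_set Wi) (\<lambda>w. return_pmf (Some (v, w))))))"

definition CCI :: "nat \<Rightarrow> real \<Rightarrow> nat pmf \<Rightarrow> (nat \<times> nat) pmf \<Rightarrow> (nat \<Rightarrow> nat \<Rightarrow> bool)
    \<Rightarrow> (nat \<Rightarrow> nat \<Rightarrow> bool) \<Rightarrow> ((nat \<Rightarrow> nat) \<times> (nat \<Rightarrow> (nat \<times> nat) option)) pmf" where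
  "CCI n \<mu> T C I J =
     bind_pmf (Pi_pmf {1..n} 0 (\<lambda>_. T)) (\<lambda>ty.
       map_pmf (\<lambda>arcs. (ty, arcs))
         (Pi_pmf {1..nat \<lfloor>\<mu> * real n\<rfloor>} None (\<lambda>a. arc_pmf C I J n ty)))"

definition arc_event :: "nat \<Rightarrow> nat \<Rightarrow> nat \<Rightarrow> ((nat \<Rightarrow> nat) \<times> (nat \<Rightarrow> (nat \<times> nat) option)) set" where
  "arc_event a t s = {\<omega>. \<exists>v w. snd \<omega> a = Some (v, w) \<and> fst \<omega> v = t \<and> fst \<omega> w = s}"

definition u_up :: "nat pmf \<Rightarrow> nat \<Rightarrow> real \<Rightarrow> nat" where
  "u_up T n \<tau> = Inf {t. \<forall>s\<ge>t. pmf T s < real n powr (\<tau> - 1)}"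

definition stable :: "nat pmf \<Rightarrow> nat \<Rightarrow> real \<Rightarrow> nat \<Rightarrow> bool" where
  "stable T n \<tau> t \<longleftrightarrow> t < u_up T n \<tau>"

definition kappa :: "real \<Rightarrow> nat pmf \<Rightarrow> (nat \<times> nat) pmf \<Rightarrow> (nat \<Rightarrow> nat \<Rightarrow> bool)
    \<Rightarrow> (nat \<Rightarrow> nat \<Rightarrow> bool) \<Rightarrow> nat \<Rightarrow> nat \<Rightarrow> real" where
  "kappa \<mu> T C I J t s = \<mu> * measure_pmf.expectation C
     (\<lambda>(i, j). (if I t i \<and> J s j then 1 else 0) / (lam T I i * rho T J j))"

end

theory Submission
  imports Defs
begin

lemma exp_bind_bounded:
  fixes f :: "'b \<Rightarrow> real"
  assumes "\<And>y. \<bar>f y\<bar> \<le> B"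
  shows "measure_pmf.expectation (bind_pmf M N) f = (\<integral>x. measure_pmf.expectation (N x) f \<partial>M)"
  unfolding measure_pmf_bind
  by (rule integral_bind[where K="count_space UNIV" and B=B and B'=1])
     (auto simp: assms measure_pmf.emeasure_space_1 measure_pmf_in_subprob_algebra
           intro: measure_pmf.finite_measure_axioms)

lemma measure_bind_pmf':
  "measure_pmf.prob (bind_pmf M N) X = (\<integral>x. measure_pmf.prob (N x) X \<partial>M)"
proof -
  have "measure_pmf.prob (bind_pmf M N) X = measure_pmf.expectation (bind_pmf M N) (indicator X)"
    by simp
  also have "\<dots> = (\<integral>x. measure_pmf.expectation (N x) (indicator X) \<partial>M)"
    by (rule exp_bind_bounded[where B=1]) (auto simp: indicator_def)
  finally show ?thesis by simp
qed

lemma var_Pi: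
  fixes h :: "nat \<Rightarrow> real" and T :: "nat pmf"
  assumes "finite V" "\<And>k. \<bar>h k\<bar> \<le> 1" "measure_pmf.expectation T h = 0"
  shows "measure_pmf.expectation (Pi_pmf V d (\<lambda>_. T)) (\<lambda>g. (\<Sum>v\<in>V. h (g v))^2) \<le> card V"
  using assms(1)
proof (induction rule: finite_induct)
  case empty
  then show ?case by simp
next
  case (insert x V)
  let ?P = "Pi_pmf V d (\<lambda>_. T)"
  let ?S = "\<lambda>g. \<Sum>v\<in>V. h (g v)"
  have Sb: "\<bar>?S g\<bar> \<le> card V" for g
  proof -
    have "\<bar>?S g\<bar> \<le> (\<Sum>v\<in>V. \<bar>h (g v)\<bar>)" by (rule sum_abs)
    also have "\<dots> \<le> (\<Sum>v\<in>V. 1)" by (intro sum_mono assms(2))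
    finally show ?thesis by simp
  qed
  have intS: "integrable ?P ?S"
    by (rule measure_pmf.integrable_const_bound[where B="card V"]) (use Sb in auto)
  have intS2: "integrable ?P (\<lambda>g. (?S g)^2)"
  proof (rule measure_pmf.integrable_const_bound[where B="(card V)^2"])
    show "AE g in ?P. norm ((?S g)^2) \<le> (card V)^2"
      using Sb by (auto intro!: AE_pmfI) (metis abs_ge_zero power2_abs power_mono)
  qed auto
  have intH: "integrable T h"
    by (rule measure_pmf.integrable_const_bound[where B=1]) (use assms(2) in auto)
  have ES: "measure_pmf.expectation ?P ?S = 0"
    using expectation_sum_Pi_pmf[of V "\<lambda>_. T" h d] insert assms intH by auto
  have Fb: "\<bar>(\<Sum>v\<in>insert x V. h (g v))^2\<bar> \<le> (card (insert x V))^2" for g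
  proof -
    have "\<bar>\<Sum>v\<in>insert x V. h (g v)\<bar> \<le> (\<Sum>v\<in>insert x V. \<bar>h (g v)\<bar>)" by (rule sum_abs)
    also have "\<dots> \<le> (\<Sum>v\<in>insert x V. 1)" by (intro sum_mono assms(2))
    finally show ?thesis by simp (metis abs_ge_zero power2_abs power_mono)
  qed
  have "measure_pmf.expectation (Pi_pmf (insert x V) d (\<lambda>_. T)) (\<lambda>g. (\<Sum>v\<in>insert x V. h (g v))^2)
     = (\<integral>y. measure_pmf.expectation (bind_pmf ?P (\<lambda>g. return_pmf (g(x:=y))))
            (\<lambda>g. (\<Sum>v\<in>insert x V. h (g v))^2) \<partial>T)"
    by (subst Pi_pmf_insert'[OF insert(1,2)], rule exp_bind_bounded[OF Fb])
  also have "\<dots> = (\<integral>y. measure_pmf.expectation ?P (\<lambda>g. (h y + ?S g)^2) \<partial>T)"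
  proof (rule Bochner_Integration.integral_cong[OF refl])
    fix y
    have "measure_pmf.expectation (bind_pmf ?P (\<lambda>g. return_pmf (g(x:=y))))
            (\<lambda>g. (\<Sum>v\<in>insert x V. h (g v))^2)
        = measure_pmf.expectation ?P (\<lambda>g. (\<Sum>v\<in>insert x V. h ((g(x:=y)) v))^2)"
      by (subst exp_bind_bounded[OF Fb]) simp
    also have "\<dots> = measure_pmf.expectation ?P (\<lambda>g. (h y + ?S g)^2)"
    proof (rule Bochner_Integration.integral_cong[OF refl])
      fix g
      have "(\<Sum>v\<in>insert x V. h ((g(x:=y)) v)) = h y + (\<Sum>v\<in>V. h ((g(x:=y)) v))"
        using insert by simp
      also have "(\<Sum>v\<in>V. h ((g(x:=y)) v)) = ?S g"
        using insert by (intro sum.cong) auto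
      finally show "(\<Sum>v\<in>insert x V. h ((g(x:=y)) v))^2 = (h y + ?S g)^2" by simp
    qed
    finally show "measure_pmf.expectation (bind_pmf ?P (\<lambda>g. return_pmf (g(x:=y))))
            (\<lambda>g. (\<Sum>v\<in>insert x V. h (g v))^2) = measure_pmf.expectation ?P (\<lambda>g. (h y + ?S g)^2)" .
  qed
  also have "\<dots> \<le> (\<integral>y. 1 + real (card V) \<partial>T)"
  proof (rule integral_mono)
    show "integrable T (\<lambda>y. 1 + real (card V))" by simp
    show "integrable T (\<lambda>y. measure_pmf.expectation ?P (\<lambda>g. (h y + ?S g)^2))"
    proof (rule measure_pmf.integrable_const_bound[where B="(1 + card V)^2"])
      show "AE y in T. norm (measure_pmf.expectation ?P (\<lambda>g. (h y + ?S g)^2)) \<le> (1 + card V)^2"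
      proof (rule AE_pmfI)
        fix y
        have b: "\<bar>(h y + ?S g)^2\<bar> \<le> (1 + card V)^2" for g
        proof -
          have "\<bar>h y + ?S g\<bar> \<le> 1 + card V" using Sb[of g] assms(2)[of y] by linarith
          thus ?thesis by simp (metis abs_ge_zero power2_abs power_mono)
        qed
        have i2: "integrable ?P (\<lambda>g. (h y + ?S g)^2)"
          by (rule measure_pmf.integrable_const_bound[where B="(1+card V)^2"]) (use b in auto)
        have u: "measure_pmf.expectation ?P (\<lambda>g. (h y + ?S g)^2) \<le> (1 + card V)^2"
          by (rule measure_pmf.integral_le_const[OF i2]) (intro AE_pmfI, rule abs_le_D1[OF b])
        have l: "0 \<le> measure_pmf.expectation ?P (\<lambda>g. (h y + ?S g)^2)"
          by (rule Bochner_Integration.integral_nonneg) simp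
        have "norm (measure_pmf.expectation ?P (\<lambda>g. (h y + ?S g)^2)) \<le> (1 + card V)^2"
          using u l by simp
        thus "norm (measure_pmf.expectation ?P (\<lambda>g. (h y + ?S g)^2)) \<le> (1 + card V)^2" .
      qed
    qed auto
    fix y
    have intS': "integrable ?P (\<lambda>g. h y * ?S g)" using intS by simp
    have "measure_pmf.expectation ?P (\<lambda>g. (h y + ?S g)^2)
        = measure_pmf.expectation ?P (\<lambda>g. (h y)^2 + 2 * h y * ?S g + (?S g)^2)"
      by (simp add: power2_eq_square algebra_simps)
    also have "\<dots> = (h y)^2 + 2 * h y * measure_pmf.expectation ?P ?S + measure_pmf.expectation ?P (\<lambda>g. (?S g)^2)"
      using intS intS2 by (simp add: Bochner_Integration.integral_add mult.assoc)
    also have "\<dots> \<le> 1 + real (card V)"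
    proof -
      have "(h y)^2 \<le> 1" using assms(2)[of y] by (simp add: abs_square_le_1)
      thus ?thesis using ES insert.IH by simp
    qed
    finally show "measure_pmf.expectation ?P (\<lambda>g. (h y + ?S g)^2) \<le> 1 + real (card V)" .
  qed
  also have "\<dots> = card (insert x V)" using insert by simp
  finally show ?case .
qed

lemma card_as_sum:
  assumes "finite V"
  shows "real (card {v\<in>V. g v \<in> B}) = (\<Sum>v\<in>V. indicator B (g v))"
  using assms by (simp add: indicator_def sum.If_cases Int_def conj_commute)

lemma meandev:
  fixes T :: "nat pmf" and B :: "nat set" and n :: nat
  assumes "n \<ge> 1"
  shows "measure_pmf.expectation (Pi_pmf {1..n} 0 (\<lambda>_. T))
           (\<lambda>g. \<bar>real (card {v\<in>{1..n}. g v \<in> B}) / n - measure_pmf.prob T B\<bar>) \<le> 1 / sqrt n"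
proof -
  define p where "p = measure_pmf.prob T B"
  define h where "h = (\<lambda>k. indicator B k - p :: real)"
  let ?P = "Pi_pmf {1..n} 0 (\<lambda>_. T)"
  define S where "S = (\<lambda>g. \<Sum>v\<in>{1..n}. h (g v))"
  define D where "D = (\<lambda>g. real (card {v\<in>{1..n}. g v \<in> B}) / n - p)"
  have p01: "0 \<le> p" "p \<le> 1" unfolding p_def by auto
  have hb: "\<bar>h k\<bar> \<le> 1" for k using p01 by (auto simp: h_def indicator_def)
  have Eh: "measure_pmf.expectation T h = 0"
    unfolding h_def p_def by (subst Bochner_Integration.integral_diff) (auto intro!: measure_pmf.integrable_const_bound[where B=1])
  have V: "measure_pmf.expectation ?P (\<lambda>g. (S g)^2) \<le> n"
    using var_Pi[of "{1..n}" h T 0] hb Eh unfolding S_def by simp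
  have DS: "D g = S g / n" for g
  proof -
    have "S g = (\<Sum>v\<in>{1..n}. indicator B (g v)) - n * p"
      unfolding S_def h_def by (simp add: sum_subtractf)
    also have "(\<Sum>v\<in>{1..n}. indicator B (g v)) = real (card {v\<in>{1..n}. g v \<in> B})"
      by (rule card_as_sum[symmetric]) simp
    finally show ?thesis using assms unfolding D_def by (simp add: field_simps)
  qed
  define s where "s = sqrt n"
  have s0: "s > 0" unfolding s_def using assms by simp
  have ss: "s * s = n" unfolding s_def by simp
  have pw: "\<bar>D g\<bar> \<le> (s * (S g)^2 / n^2 + 1 / s) / 2" for g
  proof -
    have "0 \<le> (s * \<bar>D g\<bar> - 1)^2 / s" using s0 by simp
    hence "2 * \<bar>D g\<bar> \<le> s * (D g)^2 + 1 / s" using s0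
      by (simp add: power2_eq_square field_simps)
    moreover have "(D g)^2 = (S g)^2 / n^2" by (simp add: DS power_divide)
    ultimately show ?thesis by simp
  qed
  have Sb: "\<bar>S g\<bar> \<le> n" for g
  proof -
    have "\<bar>S g\<bar> \<le> (\<Sum>v\<in>{1..n}. \<bar>h (g v)\<bar>)" unfolding S_def by (rule sum_abs)
    also have "\<dots> \<le> (\<Sum>v\<in>{1..n}. 1)" by (intro sum_mono hb)
    finally show ?thesis by simp
  qed
  have intS2: "integrable ?P (\<lambda>g. (S g)^2)"
    by (rule measure_pmf.integrable_const_bound[where B="n^2"])
       (use Sb in \<open>auto intro!: AE_pmfI\<close>, metis abs_ge_zero power2_abs power_mono)
  have intD: "integrable ?P (\<lambda>g. \<bar>D g\<bar>)"
    by (rule measure_pmf.integrable_const_bound[where B="1"])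
       (use Sb assms in \<open>auto intro!: AE_pmfI simp: DS\<close>)
  have "measure_pmf.expectation ?P (\<lambda>g. \<bar>D g\<bar>) \<le>
        measure_pmf.expectation ?P (\<lambda>g. (s * (S g)^2 / n^2 + 1 / s) / 2)"
    by (rule integral_mono[OF intD _ pw]) (use intS2 in simp)
  also have "\<dots> = (s / n^2 * measure_pmf.expectation ?P (\<lambda>g. (S g)^2) + 1 / s) / 2"
    using intS2 by (simp add: Bochner_Integration.integral_add)
  also have "\<dots> \<le> (s / n^2 * n + 1 / s) / 2"
    using V s0 by (intro divide_right_mono add_right_mono mult_left_mono) auto
  also have "\<dots> = 1 / s" using ss s0 assms by (simp add: field_simps power2_eq_square)
  finally show ?thesis unfolding D_def s_def p_def .
qed

lemma ratio_pw:
  fixes c Y n q l \<delta> :: real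
  assumes "0 \<le> c" "c \<le> Y" "0 < n" "0 \<le> q" "q \<le> l" "0 < \<delta>" "\<delta> \<le> l"
  shows "\<bar>c/Y - q/l\<bar> \<le> 2/\<delta> * (\<bar>c/n - q\<bar> + \<bar>Y/n - l\<bar>)"
proof -
  define a where "a = c/n"
  define b where "b = Y/n"
  have l0: "l > 0" using assms by simp
  have cY: "c/Y = a/b" unfolding a_def b_def using assms by (simp add: field_simps)
  have r01: "0 \<le> c/Y" "c/Y \<le> 1" using assms by (auto simp: divide_le_eq_1)
  have x01: "0 \<le> q/l" "q/l \<le> 1" using assms l0 by auto
  show ?thesis
  proof (cases "b < l/2")
    case True
    have "\<bar>c/Y - q/l\<bar> \<le> 1" using r01 x01 by linarith
    also have "1 \<le> 2/\<delta> * \<bar>b - l\<bar>"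
    proof -
      have "\<bar>b - l\<bar> \<ge> \<delta>/2" using True assms by linarith
      thus ?thesis using assms by (simp add: field_simps)
    qed
    also have "\<dots> \<le> 2/\<delta> * (\<bar>a - q\<bar> + \<bar>b - l\<bar>)" using assms by (intro mult_left_mono) auto
    finally show ?thesis unfolding a_def b_def .
  next
    case False
    hence b0: "b > 0" using l0 by linarith
    have "a/b - q/l = (l*(a - q) + q*(l - b)) / (b*l)" using b0 l0 by (simp add: field_simps)
    hence "\<bar>a/b - q/l\<bar> = \<bar>l*(a - q) + q*(l - b)\<bar> / (b*l)" using b0 l0 by simp
    also have "\<dots> \<le> (l*\<bar>a - q\<bar> + l*\<bar>b - l\<bar>) / (b*l)"
    proof (rule divide_right_mono)
      have "\<bar>l*(a - q) + q*(l - b)\<bar> \<le> \<bar>l*(a - q)\<bar> + \<bar>q*(l - b)\<bar>" by (rule abs_triangle_ineq)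
      also have "\<bar>q*(l - b)\<bar> \<le> l*\<bar>b - l\<bar>" using assms by (simp add: abs_mult abs_minus_commute mult_right_mono)
      finally show "\<bar>l*(a - q) + q*(l - b)\<bar> \<le> l*\<bar>a - q\<bar> + l*\<bar>b - l\<bar>" using l0 by (simp add: abs_mult)
    qed (use b0 l0 in simp)
    also have "\<dots> = (l*(\<bar>a - q\<bar> + \<bar>b - l\<bar>)) / (l*b)" by (simp add: distrib_left mult.commute)
    also have "\<dots> = (\<bar>a - q\<bar> + \<bar>b - l\<bar>) / b" using l0 by simp
    also have "\<dots> \<le> (\<bar>a - q\<bar> + \<bar>b - l\<bar>) / (\<delta>/2)"
      using False b0 assms by (intro divide_left_mono) auto
    also have "\<dots> = 2/\<delta> * (\<bar>a - q\<bar> + \<bar>b - l\<bar>)" by simp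
    finally show ?thesis unfolding cY a_def b_def .
  qed
qed

definition rat :: "nat \<Rightarrow> nat set \<Rightarrow> nat \<Rightarrow> (nat \<Rightarrow> nat) \<Rightarrow> real" where
  "rat n A t g = real (card {v\<in>{1..n}. g v \<in> A \<inter> {t}}) / real (card {v\<in>{1..n}. g v \<in> A})"

definition xt :: "nat pmf \<Rightarrow> nat set \<Rightarrow> nat \<Rightarrow> real" where
  "xt T A t = (if t \<in> A then pmf T t / measure_pmf.prob T A else 0)"

lemma card_mono_sub: "card {v\<in>{1..n::nat}. g v \<in> A \<inter> {t}} \<le> card {v\<in>{1..n}. g v \<in> A}"
  by (rule card_mono) auto

lemma rat01: "0 \<le> rat n A t g" "rat n A t g \<le> 1"
  unfolding rat_def using card_mono_sub[of n g A t] by (auto simp: divide_le_eq_1)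

lemma xt01: "0 \<le> xt T A t" "xt T A t \<le> 1"
proof -
  have "t \<in> A \<Longrightarrow> pmf T t \<le> measure_pmf.prob T A"
    by (metis measure_pmf.finite_measure_mono measure_pmf_single empty_subsetI insert_subset sets_measure_pmf UNIV_I)
  moreover have "0 \<le> measure_pmf.prob T A" by simp
  ultimately show "0 \<le> xt T A t" "xt T A t \<le> 1" unfolding xt_def
    by (auto simp: divide_le_eq_1 less_le)
qed

lemma core:
  fixes T :: "nat pmf" and n :: nat and \<delta> :: real
  assumes "n \<ge> 1" "\<delta> > 0" "measure_pmf.prob T A = 0 \<or> \<delta> \<le> measure_pmf.prob T A"
  shows "measure_pmf.expectation (Pi_pmf {1..n} 0 (\<lambda>_. T)) (\<lambda>g. \<bar>rat n A t g - xt T A t\<bar>)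
           \<le> 4 / (\<delta> * sqrt n)"
proof -
  let ?P = "Pi_pmf {1..n} 0 (\<lambda>_. T)"
  have pos: "0 \<le> 4 / (\<delta> * sqrt n)" using assms by simp
  show ?thesis
  proof (cases "t \<in> A")
    case False
    hence "A \<inter> {t} = {}" by auto
    hence "rat n A t g = 0" for g unfolding rat_def by simp
    moreover have "xt T A t = 0" using False unfolding xt_def by simp
    ultimately show ?thesis using pos by simp
  next
    case tA: True
    show ?thesis
    proof (cases "measure_pmf.prob T A = 0")
      case True
      have x0: "xt T A t = 0" unfolding xt_def using True by simp
      have disj: "set_pmf T \<inter> A = {}" using True by (simp add: measure_pmf_zero_iff)
      have "AE g in ?P. rat n A t g = 0"
      proof (rule AE_pmfI)
        fix g assume "g \<in> set_pmf ?P"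
        hence "\<forall>v\<in>{1..n}. g v \<in> set_pmf T" by (auto simp: set_Pi_pmf PiE_dflt_def)
        hence "{v\<in>{1..n}. g v \<in> A} = {}" using disj by auto
        thus "rat n A t g = 0" unfolding rat_def by simp
      qed
      hence "measure_pmf.expectation ?P (\<lambda>g. \<bar>rat n A t g - xt T A t\<bar>) = measure_pmf.expectation ?P (\<lambda>g. 0)"
        by (intro integral_cong_AE) (auto simp: x0 elim!: eventually_mono)
      then show ?thesis using pos by simp
    next
      case False
      hence lge: "\<delta> \<le> measure_pmf.prob T A" using assms by simp
      let ?l = "measure_pmf.prob T A"
      let ?q = "measure_pmf.prob T (A \<inter> {t})"
      have qt: "?q = pmf T t" using tA by (simp add: measure_pmf_single Int_absorb1)
      have ql: "?q \<le> ?l" by (rule measure_pmf.finite_measure_mono) auto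
      let ?F1 = "\<lambda>g. \<bar>real (card {v\<in>{1..n}. g v \<in> A \<inter> {t}}) / n - ?q\<bar>"
      let ?F2 = "\<lambda>g. \<bar>real (card {v\<in>{1..n}. g v \<in> A}) / n - ?l\<bar>"
      have pw: "\<bar>rat n A t g - xt T A t\<bar> \<le> 2/\<delta> * (?F1 g + ?F2 g)" for g
      proof -
        have "xt T A t = ?q / ?l" unfolding xt_def using tA qt by simp
        thus ?thesis unfolding rat_def
          by (simp only:, intro ratio_pw) (use card_mono_sub[of n g A t] assms lge ql in auto)
      qed
      have cb: "real (card {v\<in>{1..n}. g v \<in> B}) / n \<le> 1" for g B
      proof -
        have "card {v\<in>{1..n}. g v \<in> B} \<le> card {1..n}" by (rule card_mono) auto
        thus ?thesis using assms by (simp add: divide_le_eq_1)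
      qed
      have i1: "integrable ?P ?F1"
        by (rule measure_pmf.integrable_const_bound[where B=2])
           (use cb[of _ "A \<inter> {t}"] in \<open>auto intro!: AE_pmfI\<close>,
            smt (verit) measure_pmf.prob_le_1 measure_nonneg of_nat_0_le_iff divide_nonneg_nonneg)
      have i2: "integrable ?P ?F2"
        by (rule measure_pmf.integrable_const_bound[where B=2])
           (use cb[of _ "A"] in \<open>auto intro!: AE_pmfI\<close>,
            smt (verit) measure_pmf.prob_le_1 measure_nonneg of_nat_0_le_iff divide_nonneg_nonneg)
      have i0: "integrable ?P (\<lambda>g. \<bar>rat n A t g - xt T A t\<bar>)"
        by (rule measure_pmf.integrable_const_bound[where B=2])
           (use rat01 xt01 in \<open>auto intro!: AE_pmfI\<close>,
            smt (verit) rat01 xt01)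
      have "measure_pmf.expectation ?P (\<lambda>g. \<bar>rat n A t g - xt T A t\<bar>)
          \<le> measure_pmf.expectation ?P (\<lambda>g. 2/\<delta> * (?F1 g + ?F2 g))"
        by (rule integral_mono[OF i0 _ pw]) (use i1 i2 in simp)
      also have "\<dots> = 2/\<delta> * (measure_pmf.expectation ?P ?F1 + measure_pmf.expectation ?P ?F2)"
        using i1 i2 by simp
      also have "\<dots> \<le> 2/\<delta> * (1 / sqrt n + 1 / sqrt n)"
        using meandev[OF assms(1), of T "A \<inter> {t}"] meandev[OF assms(1), of T A] assms
        by (intro mult_left_mono add_mono) auto
      also have "\<dots> = 4 / (\<delta> * sqrt n)" by simp
      finally show ?thesis .
    qed
  qed
qed

definition Kf :: "(nat \<Rightarrow> nat \<Rightarrow> bool) \<Rightarrow> (nat \<Rightarrow> nat \<Rightarrow> bool)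
    \<Rightarrow> nat \<Rightarrow> (nat \<Rightarrow> nat) \<Rightarrow> nat \<times> nat \<Rightarrow> (nat \<times> nat) option pmf" where
  "Kf I J n ty c =
       (let Vo = {v \<in> {1..n}. I (ty v) (fst c)};
            Wi = {w \<in> {1..n}. J (ty w) (snd c)}
        in if Vo = {} \<or> Wi = {} then return_pmf None
           else bind_pmf (pmf_of_set Vo) (\<lambda>v.
                  bind_pmf (pmf_of_set Wi) (\<lambda>w. return_pmf (Some (v, w)))))"

lemma arc_Kf: "arc_pmf C I J n ty = bind_pmf C (Kf I J n ty)"
  unfolding arc_pmf_def Kf_def by (rule refl)

definition Sev :: "nat \<Rightarrow> nat \<Rightarrow> (nat \<Rightarrow> nat) \<Rightarrow> (nat \<times> nat) option set" where
  "Sev t s ty = {z. \<exists>v w. z = Some (v, w) \<and> ty v = t \<and> ty w = s}"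

lemma sum_ind_card:
  assumes "finite V"
  shows "(\<Sum>v\<in>V. (if P v then 1 else 0 :: real)) = real (card {v\<in>V. P v})"
  using assms by (simp add: sum.If_cases Int_def conj_commute)

lemma measK:
  "measure_pmf.prob (Kf I J n ty c) (Sev t s ty)
     = rat n {k. I k (fst c)} t ty * rat n {k. J k (snd c)} s ty"
proof -
  define Vo where "Vo = {v \<in> {1..n}. I (ty v) (fst c)}"
  define Wi where "Wi = {w \<in> {1..n}. J (ty w) (snd c)}"
  have r1: "rat n {k. I k (fst c)} t ty = real (card {v\<in>Vo. ty v = t}) / real (card Vo)"
    unfolding rat_def Vo_def by (intro arg_cong2[where f="(/)"] arg_cong[where f="\<lambda>x. real (card x)"]) auto
  have r2: "rat n {k. J k (snd c)} s ty = real (card {v\<in>Wi. ty v = s}) / real (card Wi)"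
    unfolding rat_def Wi_def by (intro arg_cong2[where f="(/)"] arg_cong[where f="\<lambda>x. real (card x)"]) auto
  have fin: "finite Vo" "finite Wi" unfolding Vo_def Wi_def by auto
  show ?thesis
  proof (cases "Vo = {} \<or> Wi = {}")
    case True
    hence "Kf I J n ty c = return_pmf None" unfolding Kf_def Vo_def Wi_def Let_def by auto
    moreover have "None \<notin> Sev t s ty" unfolding Sev_def by auto
    ultimately show ?thesis using True r1 r2 by auto
  next
    case False
    hence K: "Kf I J n ty c = bind_pmf (pmf_of_set Vo) (\<lambda>v.
                  bind_pmf (pmf_of_set Wi) (\<lambda>w. return_pmf (Some (v, w))))"
      unfolding Kf_def Vo_def Wi_def Let_def by auto
    have m: "indicator (Sev t s ty) (Some (v, w))
           = (if ty v = t then 1 else 0) * (if ty w = s then 1 else (0::real))" for v w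
      unfolding Sev_def by (auto simp: indicator_def)
    have "measure_pmf.prob (Kf I J n ty c) (Sev t s ty)
        = measure_pmf.expectation (pmf_of_set Vo) (\<lambda>v. if ty v = t then 1 else 0) *
          measure_pmf.expectation (pmf_of_set Wi) (\<lambda>w. if ty w = s then 1 else (0::real))"
      unfolding K by (simp add: measure_bind_pmf' m)
    also have "\<dots> = (real (card {v\<in>Vo. ty v = t}) / real (card Vo)) * (real (card {w\<in>Wi. ty w = s}) / real (card Wi))"
      using False fin by (simp add: integral_pmf_of_set sum_ind_card)
    finally show ?thesis using r1 r2 by simp
  qed
qed

lemma swap_meas:
  fixes A :: "'a pmf" and B :: "'b pmf" and K :: "'a \<Rightarrow> 'b \<Rightarrow> 'c pmf"
  shows "(\<integral>x. (\<integral>y. measure_pmf.prob (K x y) (S x) \<partial>B) \<partial>A)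
       = (\<integral>y. (\<integral>x. measure_pmf.prob (K x y) (S x) \<partial>A) \<partial>B)"
proof -
  define E where "E = {(x, z). z \<in> S x}"
  have pre: "Pair x -` E = S x" for x unfolding E_def by auto
  have "(\<integral>x. (\<integral>y. measure_pmf.prob (K x y) (S x) \<partial>B) \<partial>A)
      = measure_pmf.prob (bind_pmf A (\<lambda>x. bind_pmf B (\<lambda>y. map_pmf (Pair x) (K x y)))) E"
    by (simp add: measure_bind_pmf' pre)
  also have "\<dots> = measure_pmf.prob (bind_pmf B (\<lambda>y. bind_pmf A (\<lambda>x. map_pmf (Pair x) (K x y)))) E"
    by (subst bind_commute_pmf) (rule refl)
  also have "\<dots> = (\<integral>y. (\<integral>x. measure_pmf.prob (K x y) (S x) \<partial>A) \<partial>B)"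
    by (simp add: measure_bind_pmf' pre)
  finally show ?thesis .
qed

lemma CCI_meas:
  assumes "a \<in> {1..nat \<lfloor>\<mu> * real n\<rfloor>}"
  shows "measure_pmf.prob (CCI n \<mu> T C I J) (arc_event a t s)
   = (\<integral>c. (\<integral>ty. rat n {k. I k (fst c)} t ty * rat n {k. J k (snd c)} s ty
          \<partial>Pi_pmf {1..n} 0 (\<lambda>_. T)) \<partial>C)"
proof -
  let ?P = "Pi_pmf {1..n} 0 (\<lambda>_. T)"
  let ?Q = "\<lambda>ty. Pi_pmf {1..nat \<lfloor>\<mu> * real n\<rfloor>} None (\<lambda>a. arc_pmf C I J n ty)"
  have pre: "{arcs. (ty, arcs) \<in> arc_event a t s} = (\<lambda>f. f a) -` Sev t s ty" for ty
    unfolding arc_event_def Sev_def by auto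
  have "measure_pmf.prob (CCI n \<mu> T C I J) (arc_event a t s)
      = (\<integral>ty. measure_pmf.prob (?Q ty) ((\<lambda>f. f a) -` Sev t s ty) \<partial>?P)"
    unfolding CCI_def by (simp add: measure_bind_pmf' vimage_def pre[unfolded vimage_def])
  also have "\<dots> = (\<integral>ty. measure_pmf.prob (arc_pmf C I J n ty) (Sev t s ty) \<partial>?P)"
  proof (rule Bochner_Integration.integral_cong[OF refl])
    fix ty
    have "measure_pmf.prob (?Q ty) ((\<lambda>f. f a) -` Sev t s ty)
        = measure_pmf.prob (map_pmf (\<lambda>f. f a) (?Q ty)) (Sev t s ty)" by simp
    also have "map_pmf (\<lambda>f. f a) (?Q ty) = arc_pmf C I J n ty"
      using assms by (subst Pi_pmf_component) auto
    finally show "measure_pmf.prob (?Q ty) ((\<lambda>f. f a) -` Sev t s ty)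
        = measure_pmf.prob (arc_pmf C I J n ty) (Sev t s ty)" .
  qed
  also have "\<dots> = (\<integral>ty. (\<integral>c. measure_pmf.prob (Kf I J n ty c) (Sev t s ty) \<partial>C) \<partial>?P)"
    by (simp add: arc_Kf measure_bind_pmf')
  also have "\<dots> = (\<integral>c. (\<integral>ty. measure_pmf.prob (Kf I J n ty c) (Sev t s ty) \<partial>?P) \<partial>C)"
    by (rule swap_meas)
  also have "\<dots> = (\<integral>c. (\<integral>ty. rat n {k. I k (fst c)} t ty * rat n {k. J k (snd c)} s ty \<partial>?P) \<partial>C)"
    by (simp add: measK)
  finally show ?thesis .
qed

lemma prod_diff01:
  fixes r1 r2 x1 x2 :: real
  assumes "0 \<le> r1" "r1 \<le> 1" "0 \<le> x2" "x2 \<le> 1"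
  shows "\<bar>r1 * r2 - x1 * x2\<bar> \<le> \<bar>r1 - x1\<bar> + \<bar>r2 - x2\<bar>"
proof -
  have "r1 * r2 - x1 * x2 = r1 * (r2 - x2) + x2 * (r1 - x1)" by (simp add: algebra_simps)
  hence "\<bar>r1 * r2 - x1 * x2\<bar> \<le> \<bar>r1 * (r2 - x2)\<bar> + \<bar>x2 * (r1 - x1)\<bar>" by simp
  also have "\<bar>r1 * (r2 - x2)\<bar> \<le> \<bar>r2 - x2\<bar>"
    using assms by (simp add: abs_mult mult_left_le_one_le)
  also have "\<bar>x2 * (r1 - x1)\<bar> \<le> \<bar>r1 - x1\<bar>"
    using assms by (simp add: abs_mult mult_left_le_one_le)
  finally show ?thesis by simp
qed

lemma FG_bound:
  fixes T :: "nat pmf" and n :: nat and \<delta> :: real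
  assumes "n \<ge> 1" "\<delta> > 0"
    "measure_pmf.prob T A = 0 \<or> \<delta> \<le> measure_pmf.prob T A"
    "measure_pmf.prob T B = 0 \<or> \<delta> \<le> measure_pmf.prob T B"
  shows "\<bar>(\<integral>ty. rat n A t ty * rat n B s ty \<partial>Pi_pmf {1..n} 0 (\<lambda>_. T)) - xt T A t * xt T B s\<bar>
         \<le> 8 / (\<delta> * sqrt n)"
proof -
  let ?P = "Pi_pmf {1..n} 0 (\<lambda>_. T)"
  let ?x = "xt T A t * xt T B s"
  have b2: "\<bar>rat n A t ty - xt T A t\<bar> \<le> 2" "\<bar>rat n B s ty - xt T B s\<bar> \<le> 2" for ty
    using rat01[of n A t ty] xt01[of T A t] rat01[of n B s ty] xt01[of T B s] by auto
  have i1: "integrable ?P (\<lambda>ty. \<bar>rat n A t ty - xt T A t\<bar>)"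
    by (rule measure_pmf.integrable_const_bound[where B=2]) (use b2 in auto)
  have i2: "integrable ?P (\<lambda>ty. \<bar>rat n B s ty - xt T B s\<bar>)"
    by (rule measure_pmf.integrable_const_bound[where B=2]) (use b2 in auto)
  have ir: "integrable ?P (\<lambda>ty. rat n A t ty * rat n B s ty - ?x)"
  proof (rule measure_pmf.integrable_const_bound[where B=2])
    show "AE ty in ?P. norm (rat n A t ty * rat n B s ty - ?x) \<le> 2"
    proof (rule AE_pmfI)
      fix ty
      have "0 \<le> rat n A t ty * rat n B s ty" "rat n A t ty * rat n B s ty \<le> 1"
        "0 \<le> ?x" "?x \<le> 1"
        using rat01[of n A t ty] xt01[of T A t] rat01[of n B s ty] xt01[of T B s]
        by (auto intro: mult_le_one)
      thus "norm (rat n A t ty * rat n B s ty - ?x) \<le> 2" by simp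
    qed
  qed simp
  have irr: "integrable ?P (\<lambda>ty. rat n A t ty * rat n B s ty)"
  proof (rule measure_pmf.integrable_const_bound[where B=1])
    show "AE ty in ?P. norm (rat n A t ty * rat n B s ty) \<le> 1"
    proof (rule AE_pmfI)
      fix ty
      have "0 \<le> rat n A t ty * rat n B s ty" "rat n A t ty * rat n B s ty \<le> 1"
        using rat01[of n A t ty] rat01[of n B s ty] by (auto intro: mult_le_one)
      thus "norm (rat n A t ty * rat n B s ty) \<le> 1" by simp
    qed
  qed simp
  have "(\<integral>ty. rat n A t ty * rat n B s ty \<partial>?P) - ?x = (\<integral>ty. rat n A t ty * rat n B s ty - ?x \<partial>?P)"
    using irr by (simp add: Bochner_Integration.integral_diff)
  hence "\<bar>(\<integral>ty. rat n A t ty * rat n B s ty \<partial>?P) - ?x\<bar>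
        \<le> (\<integral>ty. \<bar>rat n A t ty * rat n B s ty - ?x\<bar> \<partial>?P)"
    using integral_abs_bound[of ?P "\<lambda>ty. rat n A t ty * rat n B s ty - ?x"] by simp
  also have "\<dots> \<le> (\<integral>ty. \<bar>rat n A t ty - xt T A t\<bar> + \<bar>rat n B s ty - xt T B s\<bar> \<partial>?P)"
  proof (rule integral_mono)
    show "integrable ?P (\<lambda>ty. \<bar>rat n A t ty * rat n B s ty - ?x\<bar>)" using ir by simp
    show "integrable ?P (\<lambda>ty. \<bar>rat n A t ty - xt T A t\<bar> + \<bar>rat n B s ty - xt T B s\<bar>)"
      using i1 i2 by simp
    fix ty
    show "\<bar>rat n A t ty * rat n B s ty - ?x\<bar> \<le> \<bar>rat n A t ty - xt T A t\<bar> + \<bar>rat n B s ty - xt T B s\<bar>"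
      by (rule prod_diff01[OF rat01 xt01])
  qed
  also have "\<dots> = (\<integral>ty. \<bar>rat n A t ty - xt T A t\<bar> \<partial>?P) + (\<integral>ty. \<bar>rat n B s ty - xt T B s\<bar> \<partial>?P)"
    using i1 i2 by simp
  also have "\<dots> \<le> 4 / (\<delta> * sqrt n) + 4 / (\<delta> * sqrt n)"
    by (intro add_mono core assms)
  finally show ?thesis by simp
qed

theorem lemma10:
  fixes T :: "nat pmf" and C :: "(nat \<times> nat) pmf"
    and I J :: "nat \<Rightarrow> nat \<Rightarrow> bool" and \<mu> \<epsilon> \<tau> :: real
  assumes "\<mu> > 0"
    and "\<epsilon> > 0" and "integrable (measure_pmf T) (\<lambda>k. real k powr (1 + \<epsilon>))"
    and "\<exists>\<delta>>0. \<forall>i. lam T I i > 0 \<longrightarrow> lam T I i \<ge> \<delta>"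
    and "\<exists>\<delta>>0. \<forall>j. rho T J j > 0 \<longrightarrow> rho T J j \<ge> \<delta>"
    and "0 < \<tau>" and "\<tau> < 1"
  shows "\<exists>Ch>0. \<forall>n t s a. n \<ge> 2 \<longrightarrow> stable T n \<tau> t \<longrightarrow> stable T n \<tau> s
           \<longrightarrow> a \<in> {1..nat \<lfloor>\<mu> * real n\<rfloor>} \<longrightarrow>
           \<bar>measure_pmf.prob (CCI n \<mu> T C I J) (arc_event a t s)
              - pmf T t * pmf T s * kappa \<mu> T C I J t s / \<mu>\<bar>
           \<le> Ch * ln (real n) * real n powr (- \<tau> / 2)"
proof -
  obtain d1 where d1: "d1 > 0" "\<forall>i. lam T I i > 0 \<longrightarrow> lam T I i \<ge> d1" using assms(4) by auto
  obtain d2 where d2: "d2 > 0" "\<forall>j. rho T J j > 0 \<longrightarrow> rho T J j \<ge> d2" using assms(5) by auto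
  define \<delta> where "\<delta> = min d1 d2"
  have \<delta>0: "\<delta> > 0" using d1 d2 unfolding \<delta>_def by simp
  have condI: "measure_pmf.prob T {k. I k i} = 0 \<or> \<delta> \<le> measure_pmf.prob T {k. I k i}" for i
  proof -
    have "0 \<le> measure_pmf.prob T {k. I k i}" by simp
    thus ?thesis using d1(2)[rule_format, of i] unfolding lam_def \<delta>_def by (smt (verit))
  qed
  have condJ: "measure_pmf.prob T {k. J k j} = 0 \<or> \<delta> \<le> measure_pmf.prob T {k. J k j}" for j
  proof -
    have "0 \<le> measure_pmf.prob T {k. J k j}" by simp
    thus ?thesis using d2(2)[rule_format, of j] unfolding rho_def \<delta>_def by (smt (verit))
  qed
  define Ch where "Ch = 8 / (\<delta> * ln 2)"
  have Ch0: "Ch > 0" unfolding Ch_def using \<delta>0 by simp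
  show ?thesis
  proof (intro exI[of _ Ch] conjI allI impI Ch0)
    fix n t s a
    assume n2: "n \<ge> (2::nat)" and "stable T n \<tau> t" "stable T n \<tau> s"
      and a: "a \<in> {1..nat \<lfloor>\<mu> * real n\<rfloor>}"
    have n1: "n \<ge> 1" using n2 by simp
    let ?P = "Pi_pmf {1..n} 0 (\<lambda>_. T)"
    define F where "F = (\<lambda>c. \<integral>ty. rat n {k. I k (fst c)} t ty * rat n {k. J k (snd c)} s ty \<partial>?P)"
    define G where "G = (\<lambda>c. xt T {k. I k (fst c)} t * xt T {k. J k (snd c)} s)"
    have L: "measure_pmf.prob (CCI n \<mu> T C I J) (arc_event a t s) = (\<integral>c. F c \<partial>C)"
      unfolding F_def by (rule CCI_meas[OF a])
    have R: "pmf T t * pmf T s * kappa \<mu> T C I J t s / \<mu> = (\<integral>c. G c \<partial>C)"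
    proof -
      have "pmf T t * pmf T s * kappa \<mu> T C I J t s / \<mu>
          = pmf T t * pmf T s * measure_pmf.expectation C
               (\<lambda>(i, j). (if I t i \<and> J s j then 1 else 0) / (lam T I i * rho T J j))"
        unfolding kappa_def using assms(1) by simp
      also have "\<dots> = (\<integral>c. pmf T t * pmf T s *
              ((\<lambda>(i, j). (if I t i \<and> J s j then 1 else 0) / (lam T I i * rho T J j)) c) \<partial>C)"
        by simp
      also have "\<dots> = (\<integral>c. G c \<partial>C)"
      proof (rule Bochner_Integration.integral_cong[OF refl])
        fix c :: "nat \<times> nat"
        obtain i j where c: "c = (i, j)" by fastforce
        show "pmf T t * pmf T s *
              ((\<lambda>(i, j). (if I t i \<and> J s j then 1 else 0) / (lam T I i * rho T J j)) c) = G c"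
          unfolding c G_def xt_def lam_def rho_def by simp
      qed
      finally show ?thesis .
    qed
    have FG: "\<bar>F c - G c\<bar> \<le> 8 / (\<delta> * sqrt n)" for c
      unfolding F_def G_def by (rule FG_bound[OF n1 \<delta>0 condI condJ])
    have Fb: "\<bar>F c\<bar> \<le> 1" for c
    proof -
      have A1: "AE ty in ?P. rat n {k. I k (fst c)} t ty * rat n {k. J k (snd c)} s ty \<le> 1"
        by (intro AE_pmfI mult_le_one rat01)
      have A2: "AE ty in ?P. 0 \<le> rat n {k. I k (fst c)} t ty * rat n {k. J k (snd c)} s ty"
        by (intro AE_pmfI mult_nonneg_nonneg rat01)
      have iR: "integrable ?P (\<lambda>ty. rat n {k. I k (fst c)} t ty * rat n {k. J k (snd c)} s ty)"
      proof (rule measure_pmf.integrable_const_bound[where B=1])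
        show "AE ty in ?P. norm (rat n {k. I k (fst c)} t ty * rat n {k. J k (snd c)} s ty) \<le> 1"
        proof (rule AE_pmfI)
          fix ty
          have "0 \<le> rat n {k. I k (fst c)} t ty * rat n {k. J k (snd c)} s ty"
               "rat n {k. I k (fst c)} t ty * rat n {k. J k (snd c)} s ty \<le> 1"
            by (auto intro: mult_le_one rat01 mult_nonneg_nonneg)
          thus "norm (rat n {k. I k (fst c)} t ty * rat n {k. J k (snd c)} s ty) \<le> 1" by simp
        qed
      qed simp
      have "F c \<le> 1" unfolding F_def by (rule measure_pmf.integral_le_const[OF iR A1])
      moreover have "0 \<le> F c" unfolding F_def by (rule integral_nonneg_AE[OF A2])
      ultimately show ?thesis by simp
    qed
    have Gb: "\<bar>G c\<bar> \<le> 1" for c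
    proof -
      have "0 \<le> G c" "G c \<le> 1" unfolding G_def by (auto intro: mult_le_one xt01 mult_nonneg_nonneg)
      thus ?thesis by simp
    qed
    have iF: "integrable C F"
      by (rule measure_pmf.integrable_const_bound[where B=1]) (use Fb in auto)
    have iG: "integrable C G"
      by (rule measure_pmf.integrable_const_bound[where B=1]) (use Gb in auto)
    have "\<bar>(\<integral>c. F c \<partial>C) - (\<integral>c. G c \<partial>C)\<bar> = \<bar>\<integral>c. F c - G c \<partial>C\<bar>"
      using iF iG by simp
    also have "\<dots> \<le> (\<integral>c. \<bar>F c - G c\<bar> \<partial>C)"
      using integral_abs_bound[of C "\<lambda>c. F c - G c"] by simp
    also have "\<dots> \<le> 8 / (\<delta> * sqrt n)"
      by (rule measure_pmf.integral_le_const) (intro integrable_abs Bochner_Integration.integrable_diff iF iG, intro AE_pmfI FG)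
    also have "\<dots> \<le> Ch * ln (real n) * real n powr (- \<tau> / 2)"
    proof -
      have ln2: "ln 2 \<le> ln (real n)" using n2 by simp
      have ln20: "0 < ln (2::real)" by simp
      have "real n powr (- 1 / 2) \<le> real n powr (- \<tau> / 2)"
        using n1 assms(7) by (intro powr_mono) auto
      moreover have "real n powr (- 1 / 2) = 1 / sqrt n"
        using n1 by (simp add: powr_minus_divide powr_half_sqrt[symmetric])
      ultimately have pw: "1 / sqrt n \<le> real n powr (- \<tau> / 2)" by simp
      have "8 / (\<delta> * sqrt n) = Ch * ln 2 * (1 / sqrt n)"
        unfolding Ch_def using ln20 \<delta>0 by simp
      also have "\<dots> \<le> Ch * ln (real n) * real n powr (- \<tau> / 2)"
      proof -
        have l0: "0 \<le> ln (real n)" using ln2 ln20 by linarith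
        have "0 \<le> Ch * ln (real n)" using Ch0 l0 by simp
        thus ?thesis using Ch0 ln2 ln20 pw l0 by (intro mult_mono mult_left_mono) auto
      qed
      finally show ?thesis .
    qed
    finally show "\<bar>measure_pmf.prob (CCI n \<mu> T C I J) (arc_event a t s)
              - pmf T t * pmf T s * kappa \<mu> T C I J t s / \<mu>\<bar>
           \<le> Ch * ln (real n) * real n powr (- \<tau> / 2)" using L R by simp
  qed
qed

end
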